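(* Let $(L,L')$ be a pair of commensurable $K$-lattices, $L=(\Lambda,\phi)$, $L'=(\Lambda',\phi')$, whose classes modulo scaling coincide, i.e. $L'=\lambda L$ for some $\lambda\in\mathbb C^*$. Then either $L=L'$ or $\phi=\phi'=0$.
   Context: $K$ is an imaginary quadratic field with a fixed embedding $K\subset\mathbb C$, $\mathcal O$ its ring of integers. A $K$-lattice $(\Lambda,\phi)$: finitely generated $\mathcal O$-submodule $\Lambda\subset\mathbb C$ with $\Lambda\otimes_{\mathcal O}K\cong K$ and $\mathcal O$-module map $\phi:K/\mathcal O\to K\Lambda/\Lambda$; commensurability: $K\Lambda_1=K\Lambda_2$ and $\phi_1=\phi_2$ mod $\Lambda_1+\Lambda_2$; scaling $\lambda(\Lambda,\phi)=(\lambda\Lambda,\lambda\phi)$. *)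

theory Defs
  imports "HOL-Analysis.Analysis" "HOL-Computational_Algebra.Computational_Algebra"
begin

text \<open>The imaginary quadratic field K = Q(sqrt(-d)) inside C, for d a positive squarefree integer.
  Every imaginary quadratic field, with its embedding into C, is of this form.\<close>
definition imag_quad_field :: "nat \<Rightarrow> complex set" where
  "imag_quad_field d = {of_real (of_rat a) + of_real (of_rat b) * \<i> * of_real (sqrt (real d)) | a b. True}"

definition alg_int :: "complex \<Rightarrow> bool" where
  "alg_int z \<longleftrightarrow> (\<exists>p :: int poly. lead_coeff p = 1 \<and> poly (map_poly of_int p) z = 0)"

definition ring_of_integers :: "complex set \<Rightarrow> complex set" where
  "ring_of_integers K = {z \<in> K. alg_int z}"

definition span_over :: "complex set \<Rightarrow> complex set \<Rightarrow> complex set" where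
  "span_over R S = {(\<Sum>i<n. c i * x i) | (n::nat) c x. (\<forall>i<n. c i \<in> R \<and> x i \<in> S)}"

text \<open>Lambda is a finitely generated O-submodule of C with Lambda (x)_O K = K,
  i.e. its K-span K Lambda is a one-dimensional K-subspace of C.\<close>
definition is_K_lattice_module :: "complex set \<Rightarrow> complex set \<Rightarrow> bool" where
  "is_K_lattice_module K \<Lambda> \<longleftrightarrow>
     (\<exists>G. finite G \<and> \<Lambda> = span_over (ring_of_integers K) G) \<and>
     (\<exists>z. z \<noteq> 0 \<and> span_over K \<Lambda> = {k * z | k. k \<in> K})"

text \<open>phi : K/O \<rightarrow> K Lambda / Lambda is represented by a function f : K \<rightarrow> K Lambda
  (a lift on representatives); f represents an O-module map K/O \<rightarrow> K Lambda/Lambda iff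
  the following holds (values compared modulo Lambda).\<close>
definition is_K_lattice :: "complex set \<Rightarrow> complex set \<Rightarrow> (complex \<Rightarrow> complex) \<Rightarrow> bool" where
  "is_K_lattice K \<Lambda> f \<longleftrightarrow> is_K_lattice_module K \<Lambda> \<and>
     (\<forall>x\<in>K. f x \<in> span_over K \<Lambda>) \<and>
     (\<forall>x\<in>ring_of_integers K. f x \<in> \<Lambda>) \<and>
     (\<forall>x\<in>K. \<forall>y\<in>K. f (x + y) - f x - f y \<in> \<Lambda>) \<and>
     (\<forall>a\<in>ring_of_integers K. \<forall>x\<in>K. f (a * x) - a * f x \<in> \<Lambda>)"

definition K_lattice_eq :: "complex set \<Rightarrow> complex set \<times> (complex \<Rightarrow> complex) \<Rightarrow> complex set \<times> (complex \<Rightarrow> complex) \<Rightarrow> bool" where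
  "K_lattice_eq K L L' \<longleftrightarrow> fst L = fst L' \<and> (\<forall>x\<in>K. snd L x - snd L' x \<in> fst L)"

definition K_lattice_phi_zero :: "complex set \<Rightarrow> complex set \<times> (complex \<Rightarrow> complex) \<Rightarrow> bool" where
  "K_lattice_phi_zero K L \<longleftrightarrow> (\<forall>x\<in>K. snd L x \<in> fst L)"

definition commensurable :: "complex set \<Rightarrow> complex set \<times> (complex \<Rightarrow> complex) \<Rightarrow> complex set \<times> (complex \<Rightarrow> complex) \<Rightarrow> bool" where
  "commensurable K L L' \<longleftrightarrow> span_over K (fst L) = span_over K (fst L') \<and>
     (\<forall>x\<in>K. snd L x - snd L' x \<in> {u + v | u v. u \<in> fst L \<and> v \<in> fst L'})"

definition scale_K_lattice :: "complex \<Rightarrow> complex set \<times> (complex \<Rightarrow> complex) \<Rightarrow> complex set \<times> (complex \<Rightarrow> complex)" where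
  "scale_K_lattice c L = ((\<lambda>z. c * z) ` fst L, (\<lambda>x. c * snd L x))"

end

theory Submission
  imports Defs
begin


lemma flip_sum_odd:
  fixes a :: "nat \<Rightarrow> complex"
  assumes "odd k"
  shows "(\<Sum>i\<le>k. a i * a (k - i) * (-1) ^ (k - i)) = 0"
proof -
  let ?S = "(\<Sum>i\<le>k. a i * a (k - i) * (-1) ^ (k - i))"
  have "?S = (\<Sum>i\<le>k. a (k - i) * a (k - (k - i)) * (-1) ^ (k - (k - i)))"
    by (rule sum.reindex_bij_witness[where i="\<lambda>i. k - i" and j="\<lambda>i. k - i"]) auto
  also have "\<dots> = (\<Sum>i\<le>k. - (a i * a (k - i) * (-1) ^ (k - i)))"
  proof (rule sum.cong)
    fix i assume "i \<in> {..k}"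
    then have i: "i \<le> k" by simp
    have "(-1::complex) ^ i = - ((-1) ^ (k - i))"
      using i assms by (auto simp: minus_one_power_iff)
    then show "a (k - i) * a (k - (k - i)) * (-1) ^ (k - (k - i)) = - (a i * a (k - i) * (-1) ^ (k - i))"
      using i by simp
  qed simp
  also have "\<dots> = - ?S" by (simp add: sum_negf)
  finally show ?thesis by simp
qed

lemma alg_int_mult_sqrt:
  fixes w z :: complex and D :: int
  assumes wD: "w * w = of_int D" and D0: "D \<noteq> 0" and az: "algebraic_int z"
  shows "algebraic_int (w * z)"
proof -
  from az obtain p where p1: "lead_coeff p = 1" and pZ: "\<forall>i. coeff p i \<in> \<int>" and pz: "poly p z = 0"
    by (auto simp: algebraic_int.simps)
  define n where "n = degree p"
  define u where "u = inverse w"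
  have w0: "w \<noteq> 0" using wD D0 by auto
  have u0: "u \<noteq> 0" using w0 by (simp add: u_def)
  have uw: "u * w = 1" using w0 by (simp add: u_def)
  have uu: "u * u = inverse (of_int D)" using wD by (simp add: u_def flip: inverse_mult_distrib)
  define A where "A = pcompose p [:0, u:]"
  define B where "B = pcompose p [:0, -u:]"
  define R where "R = smult ((- of_int D) ^ n) (A * B)"
  have p0: "p \<noteq> 0" using p1 by auto
  have degA: "degree A = n" using u0 by (simp add: A_def degree_pcompose n_def)
  have degB: "degree B = n" using u0 by (simp add: B_def degree_pcompose n_def)
  have lcA: "lead_coeff A = u ^ n" unfolding A_def using u0 p1
    by (subst lead_coeff_comp) (auto simp: n_def)
  have lcB: "lead_coeff B = (-u) ^ n" unfolding B_def using u0 p1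
    by (subst lead_coeff_comp) (auto simp: n_def)
  have A0: "A \<noteq> 0" using lcA u0 by auto
  have B0: "B \<noteq> 0" using lcB u0 by auto
  have degR: "degree R = 2 * n" using A0 B0 D0 degA degB
    by (simp add: R_def degree_mult_eq)
  have lcR: "lead_coeff R = 1"
  proof -
    have "lead_coeff R = (- of_int D) ^ n * (u ^ n * (-u) ^ n)"
      unfolding R_def lead_coeff_smult lead_coeff_mult lcA lcB ..
    also have "u ^ n * (-u) ^ n = (- (u * u)) ^ n"
      by (simp add: power_mult_distrib[symmetric])
    also have "(- of_int D :: complex) ^ n * (- (u * u)) ^ n = ((- of_int D) * (- (u*u))) ^ n"
      by (rule power_mult_distrib[symmetric])
    also have "(- of_int D :: complex) * (- (u*u)) = 1" using uu D0 by simp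
    finally show ?thesis by simp
  qed
  have wzu: "w * z * u = z" using uw by (simp add: mult.commute mult.left_commute)
  have "poly [:0, u:] (w * z) = z" using wzu by simp
  then have "poly A (w * z) = 0" unfolding A_def poly_pcompose using pz by (simp only:)
  then have polyR: "poly R (w * z) = 0" by (simp add: R_def)
  have coeffR: "coeff R k \<in> \<int>" for k
  proof -
    define S where "S = (\<Sum>i\<le>k. coeff p i * coeff p (k - i) * (-1) ^ (k - i))"
    have SZ: "S \<in> \<int>" unfolding S_def using pZ
      by (intro Ints_sum Ints_mult) auto
    have cAB: "coeff (A * B) k = u ^ k * S"
    proof -
      have "coeff (A * B) k = (\<Sum>i\<le>k. u ^ i * coeff p i * ((-u) ^ (k - i) * coeff p (k - i)))"
        by (simp add: coeff_mult A_def B_def coeff_pcompose_linear)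
      also have "\<dots> = (\<Sum>i\<le>k. u ^ k * (coeff p i * coeff p (k - i) * (-1) ^ (k - i)))"
      proof (rule sum.cong)
        fix i assume "i \<in> {..k}"
        then have "u ^ k = u ^ i * u ^ (k - i)" by (simp flip: power_add)
        moreover have "(-u) ^ (k - i) = (-1) ^ (k - i) * u ^ (k - i)" by (rule power_minus)
        ultimately show "u ^ i * coeff p i * ((-u) ^ (k - i) * coeff p (k - i)) =
          u ^ k * (coeff p i * coeff p (k - i) * (-1) ^ (k - i))"
          by (simp add: algebra_simps)
      qed simp
      finally show ?thesis by (simp add: S_def sum_distrib_left)
    qed
    show ?thesis
    proof (cases "k > 2 * n")
      case True
      then have "coeff R k = 0" using degR by (simp add: coeff_eq_0)
      then show ?thesis by simp
    next
      case False
      show ?thesis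
      proof (cases "even k")
        case False
        then have "S = 0" unfolding S_def by (rule flip_sum_odd)
        then show ?thesis by (simp add: R_def cAB)
      next
        case True
        then obtain m where km: "k = 2 * m" by auto
        with \<open>\<not> k > 2 * n\<close> have mn: "m \<le> n" by simp
        have "u ^ k = inverse (of_int D) ^ m" using km uu by (simp add: power_mult power2_eq_square)
        have "(- of_int D :: complex) ^ n * u ^ k = (-1) ^ n * of_int D ^ (n - m)"
        proof -
          have "(of_int D :: complex) ^ n = of_int D ^ (n - m) * of_int D ^ m"
            using mn by (simp flip: power_add)
          then have "(- of_int D :: complex) ^ n * u ^ k = (-1) ^ n * (of_int D ^ (n - m) * (of_int D ^ m * inverse (of_int D) ^ m))"
            unfolding \<open>u ^ k = _\<close> power_minus[of "of_int D"] by (simp only: ac_simps)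
          also have "of_int D ^ m * inverse (of_int D) ^ m = (1::complex)"
            using D0 by (simp flip: power_mult_distrib)
          finally show ?thesis by simp
        qed
        then have "coeff R k = (-1) ^ n * of_int D ^ (n - m) * S"
          by (simp add: R_def cAB mult.assoc)
        then show ?thesis using SZ by simp
      qed
    qed
  qed
  show ?thesis
    by (rule algebraic_int.intros[of R]) (use lcR coeffR polyR in auto)
qed



lemma span_over_zero: "0 \<in> span_over R S"
  unfolding span_over_def by (rule CollectI, rule exI[of _ 0]) auto

lemma span_over_single: "c \<in> R \<Longrightarrow> x \<in> S \<Longrightarrow> c * x \<in> span_over R S"
  unfolding span_over_def
  by (rule CollectI, rule exI[of _ 1], rule exI[of _ "\<lambda>_. c"], rule exI[of _ "\<lambda>_. x"]) auto

lemma span_over_add: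
  assumes "x \<in> span_over R S" "y \<in> span_over R S"
  shows "x + y \<in> span_over R S"
proof -
  from assms(1) obtain n1 :: nat and c1 x1 where h1: "x = (\<Sum>i<n1. c1 i * x1 i)" "\<forall>i<n1. c1 i \<in> R \<and> x1 i \<in> S"
    unfolding span_over_def by blast
  from assms(2) obtain n2 :: nat and c2 x2 where h2: "y = (\<Sum>i<n2. c2 i * x2 i)" "\<forall>i<n2. c2 i \<in> R \<and> x2 i \<in> S"
    unfolding span_over_def by blast
  define c where "c i = (if i < n1 then c1 i else c2 (i - n1))" for i
  define xx where "xx i = (if i < n1 then x1 i else x2 (i - n1))" for i
  have "(\<Sum>i<n1 + n2. c i * xx i) = (\<Sum>i<n1. c i * xx i) + (\<Sum>i\<in>{n1..<n1+n2}. c i * xx i)"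
    by (subst sum.union_disjoint[symmetric]) (auto intro!: sum.cong)
  also have "(\<Sum>i<n1. c i * xx i) = x" unfolding h1 c_def xx_def by simp
  also have "(\<Sum>i\<in>{n1..<n1+n2}. c i * xx i) = (\<Sum>i<n2. c (i + n1) * xx (i + n1))"
    using sum.shift_bounds_nat_ivl[of "\<lambda>i. c i * xx i" 0 n1 n2]
    by (simp add: atLeast0LessThan add.commute)
  also have "\<dots> = y" unfolding h2 c_def xx_def by simp
  finally have "x + y = (\<Sum>i<n1 + n2. c i * xx i)" by simp
  moreover have "\<forall>i<n1 + n2. c i \<in> R \<and> xx i \<in> S"
    using h1(2) h2(2) by (auto simp: c_def xx_def)
  ultimately show ?thesis unfolding span_over_def by blast
qed

lemma span_over_mult:
  assumes "x \<in> span_over R S" "\<And>r. r \<in> R \<Longrightarrow> a * r \<in> R"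
  shows "a * x \<in> span_over R S"
proof -
  from assms(1) obtain n :: nat and c xx where h: "x = (\<Sum>i<n. c i * xx i)" "\<forall>i<n. c i \<in> R \<and> xx i \<in> S"
    unfolding span_over_def by blast
  have e: "a * x = (\<Sum>i<n. (a * c i) * xx i)" unfolding h by (simp add: sum_distrib_left mult.assoc)
  have "\<forall>i<n. a * c i \<in> R \<and> xx i \<in> S" using h(2) assms(2) by auto
  then show ?thesis unfolding span_over_def
    by (intro CollectI exI[of _ n] exI[of _ "\<lambda>i. a * c i"] exI[of _ xx]) (simp add: e)
qed

lemma span_over_subset_zero:
  assumes "S \<subseteq> {0}" shows "span_over R S \<subseteq> {0}"
proof
  fix y assume "y \<in> span_over R S"
  then obtain n :: nat and c xx where h: "y = (\<Sum>i<n. c i * xx i)" "\<forall>i<n. c i \<in> R \<and> xx i \<in> S"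
    unfolding span_over_def by blast
  have "y = (\<Sum>i<n. 0)" unfolding h(1) using h(2) assms by (intro sum.cong) auto
  then show "y \<in> {0}" by simp
qed



definition om :: "nat \<Rightarrow> complex" where "om d = \<i> * complex_of_real (sqrt (real d))"

lemma om_sq: "om d * om d = - of_nat d"
proof -
  have "om d * om d = (\<i> * \<i>) * (complex_of_real (sqrt (real d)) * complex_of_real (sqrt (real d)))"
    by (simp add: om_def mult_ac)
  also have "complex_of_real (sqrt (real d)) * complex_of_real (sqrt (real d)) = complex_of_real (real d)"
    by (simp flip: of_real_mult)
  finally show ?thesis by simp
qed

lemma K_iff: "x \<in> imag_quad_field d \<longleftrightarrow> (\<exists>a\<in>\<rat>. \<exists>b\<in>\<rat>. x = of_real a + of_real b * om d)"
proof
  assume "x \<in> imag_quad_field d"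
  then obtain a b where "x = of_real (of_rat a) + of_real (of_rat b) * \<i> * of_real (sqrt (real d))"
    unfolding imag_quad_field_def by blast
  then show "\<exists>a\<in>\<rat>. \<exists>b\<in>\<rat>. x = of_real a + of_real b * om d"
    by (intro bexI[of _ "of_rat a"] bexI[of _ "of_rat b"]) (auto simp: om_def mult.assoc)
next
  assume "\<exists>a\<in>\<rat>. \<exists>b\<in>\<rat>. x = of_real a + of_real b * om d"
  then obtain a b where ab: "a \<in> \<rat>" "b \<in> \<rat>" "x = of_real a + of_real b * om d" by blast
  from ab(1) obtain a' where a': "a = of_rat a'" by (auto elim: Rats_cases)
  from ab(2) obtain b' where b': "b = of_rat b'" by (auto elim: Rats_cases)
  show "x \<in> imag_quad_field d" unfolding imag_quad_field_def
    using ab(3) a' b' by (auto simp: om_def mult.assoc)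
qed

lemma K_I: "a \<in> \<rat> \<Longrightarrow> b \<in> \<rat> \<Longrightarrow> of_real a + of_real b * om d \<in> imag_quad_field d"
  using K_iff by blast

lemma K_mult_formula:
  "(of_real a + of_real b * om d) * (of_real a' + of_real b' * om d) =
   of_real (a * a' - real d * b * b') + of_real (a * b' + b * a') * om d"
proof -
  have "(of_real a + of_real b * om d) * (of_real a' + of_real b' * om d) =
    of_real a * of_real a' + of_real b * of_real b' * (om d * om d) + (of_real a * of_real b' + of_real b * of_real a') * om d"
    by (simp add: algebra_simps)
  also have "\<dots> = of_real (a * a' - real d * b * b') + of_real (a * b' + b * a') * om d"
    unfolding om_sq by (simp add: algebra_simps)
  finally show ?thesis .
qed

lemma K_mult: "x \<in> imag_quad_field d \<Longrightarrow> y \<in> imag_quad_field d \<Longrightarrow> x * y \<in> imag_quad_field d"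
proof -
  assume "x \<in> imag_quad_field d" "y \<in> imag_quad_field d"
  then obtain a b a' b' where h: "a \<in> \<rat>" "b \<in> \<rat>" "a' \<in> \<rat>" "b' \<in> \<rat>"
    "x = of_real a + of_real b * om d" "y = of_real a' + of_real b' * om d" unfolding K_iff by blast
  have "of_real (a * a' - real d * b * b') + of_real (a * b' + b * a') * om d \<in> imag_quad_field d"
    using h by (intro K_I) auto
  then show ?thesis unfolding h(5,6) K_mult_formula .
qed

lemma K_add: "x \<in> imag_quad_field d \<Longrightarrow> y \<in> imag_quad_field d \<Longrightarrow> x + y \<in> imag_quad_field d"
proof -
  assume "x \<in> imag_quad_field d" "y \<in> imag_quad_field d"
  then obtain a b a' b' where h: "a \<in> \<rat>" "b \<in> \<rat>" "a' \<in> \<rat>" "b' \<in> \<rat>"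
    "x = of_real a + of_real b * om d" "y = of_real a' + of_real b' * om d" unfolding K_iff by blast
  have e: "x + y = of_real (a + a') + of_real (b + b') * om d" using h by (simp add: algebra_simps)
  have "of_real (a + a') + of_real (b + b') * om d \<in> imag_quad_field d" using h by (intro K_I) auto
  then show ?thesis unfolding e .
qed

lemma K_one: "1 \<in> imag_quad_field d"
  using K_I[of 1 0 d] by simp

lemma K_om: "om d \<in> imag_quad_field d"
  using K_I[of 0 1 d] by simp

lemma K_inverse:
  assumes d: "d > 0" and x: "x \<in> imag_quad_field d"
  shows "inverse x \<in> imag_quad_field d"
proof (cases "x = 0")
  case True then show ?thesis using K_I[of 0 0 d] by simp
next
  case False
  from x obtain a b where h: "a \<in> \<rat>" "b \<in> \<rat>" "x = of_real a + of_real b * om d" unfolding K_iff by blast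
  define n where "n = a * a + real d * b * b"
  have n0: "n \<noteq> 0"
  proof
    assume "n = 0"
    have s1: "a * a \<ge> 0" by simp
    have s2: "real d * (b * b) \<ge> 0" by simp
    have s3: "a * a + real d * (b * b) = 0" using \<open>n = 0\<close> by (simp add: n_def mult.assoc)
    have "a * a = 0" using s1 s2 s3 by linarith
    moreover have "real d * (b * b) = 0" using s1 s2 s3 by linarith
    ultimately have "a = 0" "b = 0" using d by simp_all
    then show False using False h by simp
  qed
  have "a * (a / n) - real d * b * (- b / n) = (a * a) / n + (real d * b * b) / n" by simp
  also have "\<dots> = (a * a + real d * b * b) / n" by (rule add_divide_distrib[symmetric])
  also have "\<dots> = 1" using n0 unfolding n_def by simp
  finally have r1: "a * (a / n) - real d * b * (- b / n) = 1" .
  have r2: "a * (- b / n) + b * (a / n) = 0" by (simp add: field_simps)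
  have "x * (of_real (a / n) + of_real (- b / n) * om d) = of_real 1 + of_real 0 * om d"
    unfolding h(3) K_mult_formula r1 r2 ..
  then have "x * (of_real (a / n) + of_real (- b / n) * om d) = 1" using n0 by simp
  then have e: "inverse x = of_real (a / n) + of_real (- b / n) * om d" by (rule inverse_unique)
  have "n \<in> \<rat>" using h unfolding n_def by auto
  then have "of_real (a / n) + of_real (- b / n) * om d \<in> imag_quad_field d"
    using h by (intro K_I) auto
  then show ?thesis unfolding e .
qed

lemma K_div:
  "d > 0 \<Longrightarrow> x \<in> imag_quad_field d \<Longrightarrow> y \<in> imag_quad_field d \<Longrightarrow> x / y \<in> imag_quad_field d"
  unfolding divide_inverse by (intro K_mult K_inverse)

lemma Rats_common_denom:
  assumes "(a::real) \<in> \<rat>" "b \<in> \<rat>"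
  shows "\<exists>N::int. N > 0 \<and> of_int N * a \<in> \<int> \<and> of_int N * b \<in> \<int>"
proof -
  from assms(1) obtain p1 q1 where 1: "q1 > 0" "a = of_int p1 / of_int q1" by (auto elim: Rats_cases')
  from assms(2) obtain p2 q2 where 2: "q2 > 0" "b = of_int p2 / of_int q2" by (auto elim: Rats_cases')
  have "of_int (q1 * q2) * a = of_int (p1 * q2)" using 1 by (simp add: field_simps)
  moreover have "of_int (q1 * q2) * b = of_int (p2 * q1)" using 2 by (simp add: field_simps)
  ultimately show ?thesis using 1 2 by (intro exI[of _ "q1 * q2"]) auto
qed


lemma alg_int_iff: "alg_int z \<longleftrightarrow> algebraic_int z"
  unfolding alg_int_def algebraic_int_altdef_ipoly by (simp add: conj_commute)

lemma zw_alg_int: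
  assumes "p \<in> \<int>" "q \<in> \<int>"
  shows "algebraic_int (of_real p + of_real q * om d)"
proof -
  from assms(1) obtain p' where p': "p = of_int p'" by (auto elim: Ints_cases)
  from assms(2) obtain q' where q': "q = of_int q'" by (auto elim: Ints_cases)
  define P :: "complex poly" where "P = [:of_int (p' * p' + int d * q' * q'), of_int (- 2 * p'), 1:]"
  have lc: "lead_coeff P = 1" by (simp add: P_def)
  have cZ: "\<forall>i. coeff P i \<in> \<int>"
  proof
    fix i show "coeff P i \<in> \<int>"
      by (cases i; cases "i - 1"; simp add: P_def coeff_pCons split: nat.splits)
  qed
  have e: "of_real p + of_real q * om d = of_int p' + of_int q' * om d" by (simp add: p' q')
  have "poly P (of_int p' + of_int q' * om d) =
     of_int q' * of_int q' * (om d * om d) + of_int q' * of_int q' * of_nat d"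
    by (simp add: P_def algebra_simps power2_eq_square)
  also have "\<dots> = 0" by (simp add: om_sq)
  finally have "poly P (of_real p + of_real q * om d) = 0" unfolding e .
  then show ?thesis using lc cZ by (intro algebraic_int.intros[of P]) auto
qed

lemma O_iff: "z \<in> ring_of_integers K \<longleftrightarrow> z \<in> K \<and> algebraic_int z"
  unfolding ring_of_integers_def alg_int_iff by simp

lemma zw_O:
  assumes "p \<in> \<int>" "q \<in> \<int>"
  shows "of_real p + of_real q * om d \<in> ring_of_integers (imag_quad_field d)"
proof -
  have "p \<in> \<rat>" "q \<in> \<rat>" using assms by (auto elim!: Ints_cases)
  then show ?thesis unfolding O_iff using zw_alg_int[OF assms] by (auto intro!: K_I)
qed

lemma O_neg: "z \<in> ring_of_integers (imag_quad_field d) \<Longrightarrow> -1 * z \<in> ring_of_integers (imag_quad_field d)"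
proof -
  assume z: "z \<in> ring_of_integers (imag_quad_field d)"
  have "-1 \<in> imag_quad_field d" using K_I[of "-1" 0 d] by simp
  then have "-1 * z \<in> imag_quad_field d" using z unfolding O_iff by (intro K_mult) auto
  moreover have "algebraic_int (-1 * z)" using z unfolding O_iff by auto
  ultimately show ?thesis unfolding O_iff by blast
qed

lemma O_om: "z \<in> ring_of_integers (imag_quad_field d) \<Longrightarrow> om d * z \<in> ring_of_integers (imag_quad_field d)"
proof -
  assume z: "z \<in> ring_of_integers (imag_quad_field d)"
  have e: "om d * om d = of_int (- int d)" by (simp add: om_sq)
  have K: "om d * z \<in> imag_quad_field d" using z K_om[of d] unfolding O_iff by (intro K_mult) auto
  have "algebraic_int (om d * z)"
  proof (cases "d = 0")
    case True then show ?thesis by (simp add: om_def)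
  next
    case False
    then show ?thesis using z unfolding O_iff by (intro alg_int_mult_sqrt[OF e]) auto
  qed
  then show ?thesis using K unfolding O_iff by blast
qed

lemma L_neg: "v \<in> span_over (ring_of_integers (imag_quad_field d)) G \<Longrightarrow>
  - v \<in> span_over (ring_of_integers (imag_quad_field d)) G"
proof -
  assume v: "v \<in> span_over (ring_of_integers (imag_quad_field d)) G"
  have "-1 * v \<in> span_over (ring_of_integers (imag_quad_field d)) G"
    by (rule span_over_mult[OF v]) (rule O_neg)
  then show ?thesis by simp
qed

lemma L_om: "v \<in> span_over (ring_of_integers (imag_quad_field d)) G \<Longrightarrow>
  om d * v \<in> span_over (ring_of_integers (imag_quad_field d)) G"
proof -
  assume v: "v \<in> span_over (ring_of_integers (imag_quad_field d)) G"
  show ?thesis by (rule span_over_mult[OF v]) (rule O_om)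
qed

lemma L_nat: "v \<in> span_over R G \<Longrightarrow> of_nat n * v \<in> span_over R G"
proof (induction n)
  case 0 then show ?case by (simp add: span_over_zero)
next
  case (Suc n)
  then have "v + of_nat n * v \<in> span_over R G" by (intro span_over_add)
  then show ?case by (simp add: algebra_simps)
qed

lemma L_int: "v \<in> span_over (ring_of_integers (imag_quad_field d)) G \<Longrightarrow>
  of_int k * v \<in> span_over (ring_of_integers (imag_quad_field d)) G"
proof -
  assume v: "v \<in> span_over (ring_of_integers (imag_quad_field d)) G"
  have "k = int (nat k) \<or> k = - int (nat (- k))" by linarith
  then show ?thesis
  proof
    assume k: "k = int (nat k)"
    have "of_int (int (nat k)) * v \<in> span_over (ring_of_integers (imag_quad_field d)) G"
      using L_nat[OF v, of "nat k"] by (simp only: of_int_of_nat_eq)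
    moreover have "(of_int k :: complex) = of_int (int (nat k))" using k by (rule arg_cong)
    ultimately show ?thesis by simp
  next
    assume k: "k = - int (nat (- k))"
    have "- (of_nat (nat (- k)) * v) \<in> span_over (ring_of_integers (imag_quad_field d)) G"
      by (rule L_neg[OF L_nat[OF v]])
    moreover have "(of_int k :: complex) = of_int (- int (nat (- k)))" using k by (rule arg_cong)
    moreover have "(of_int (- int (nat (- k))) :: complex) = - of_nat (nat (- k))" by simp
    ultimately show ?thesis by simp
  qed
qed

lemma L_zw:
  assumes v: "v \<in> span_over (ring_of_integers (imag_quad_field d)) G" and "p \<in> \<int>" "q \<in> \<int>"
  shows "(of_real p + of_real q * om d) * v \<in> span_over (ring_of_integers (imag_quad_field d)) G"
proof -
  from assms(2) obtain p' where p': "p = of_int p'" by (auto elim: Ints_cases)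
  from assms(3) obtain q' where q': "q = of_int q'" by (auto elim: Ints_cases)
  have "of_int p' * v + of_int q' * (om d * v) \<in> span_over (ring_of_integers (imag_quad_field d)) G"
    by (intro span_over_add L_int L_om v)
  then show ?thesis by (simp add: p' q' algebra_simps)
qed

theorem mainTheorem14:
  fixes d :: nat and \<Lambda> \<Lambda>' :: "complex set" and \<phi> \<phi>' :: "complex \<Rightarrow> complex" and c :: complex
  defines "K \<equiv> imag_quad_field d"
  assumes "d > 0" and "squarefree d"
    and "is_K_lattice K \<Lambda> \<phi>" and "is_K_lattice K \<Lambda>' \<phi>'"
    and "commensurable K (\<Lambda>, \<phi>) (\<Lambda>', \<phi>')"
    and "c \<noteq> 0" and "K_lattice_eq K (\<Lambda>', \<phi>') (scale_K_lattice c (\<Lambda>, \<phi>))"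
  shows "K_lattice_eq K (\<Lambda>, \<phi>) (\<Lambda>', \<phi>') \<or>
         (K_lattice_phi_zero K (\<Lambda>, \<phi>) \<and> K_lattice_phi_zero K (\<Lambda>', \<phi>'))"
proof -
  let ?O = "ring_of_integers (imag_quad_field d)"
  from assms(4) obtain G z where LG: "\<Lambda> = span_over ?O G" and z0: "z \<noteq> 0"
    and spanL: "span_over K \<Lambda> = {k * z | k. k \<in> K}"
    and phiLin: "\<forall>a\<in>?O. \<forall>x\<in>K. \<phi> (a * x) - a * \<phi> x \<in> \<Lambda>"
    unfolding is_K_lattice_def is_K_lattice_module_def K_def by blast
  from assms(5) obtain G' where LG': "\<Lambda>' = span_over ?O G'"
    unfolding is_K_lattice_def is_K_lattice_module_def K_def by blast
  from assms(6) have spanEq: "span_over K \<Lambda> = span_over K \<Lambda>'"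
    and comm: "\<forall>x\<in>K. \<phi> x - \<phi>' x \<in> {u + v | u v. u \<in> \<Lambda> \<and> v \<in> \<Lambda>'}"
    unfolding commensurable_def by auto
  from assms(8) have L'eq: "\<Lambda>' = (\<lambda>z. c * z) ` \<Lambda>" and phi'eq: "\<forall>x\<in>K. \<phi>' x - c * \<phi> x \<in> \<Lambda>'"
    unfolding K_lattice_eq_def scale_K_lattice_def by auto
  have addL: "x + y \<in> \<Lambda>" if "x \<in> \<Lambda>" "y \<in> \<Lambda>" for x y
    using that unfolding LG by (rule span_over_add)
  have addL': "x + y \<in> \<Lambda>'" if "x \<in> \<Lambda>'" "y \<in> \<Lambda>'" for x y
    using that unfolding LG' by (rule span_over_add)
  show ?thesis
  proof (cases "c = 1")
    case True
    then have LL: "\<Lambda>' = \<Lambda>" using L'eq by simp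
    have "\<phi> x - \<phi>' x \<in> \<Lambda>" if "x \<in> K" for x
    proof -
      have "\<phi>' x - c * \<phi> x \<in> \<Lambda>" using phi'eq that LL by auto
      then have "- (\<phi>' x - c * \<phi> x) \<in> \<Lambda>" unfolding LG by (rule L_neg)
      then show ?thesis using True by simp
    qed
    then show ?thesis unfolding K_lattice_eq_def using LL by auto
  next
    case False
    have "\<exists>w\<in>\<Lambda>. w \<noteq> 0"
    proof (rule ccontr)
      assume "\<not> ?thesis"
      then have "\<Lambda> \<subseteq> {0}" by auto
      then have "span_over K \<Lambda> \<subseteq> {0}" by (rule span_over_subset_zero)
      moreover have "z \<in> span_over K \<Lambda>" unfolding spanL using K_one[of d]
        by (auto simp: K_def intro!: exI[of _ 1])
      ultimately show False using z0 by auto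
    qed
    then obtain w where w: "w \<in> \<Lambda>" "w \<noteq> 0" by blast
    have "1 * w \<in> span_over K \<Lambda>" using w K_one[of d] unfolding K_def by (intro span_over_single)
    then obtain k where k: "k \<in> K" "w = k * z" unfolding spanL by auto
    have "c * w \<in> \<Lambda>'" using w L'eq by auto
    then have "1 * (c * w) \<in> span_over K \<Lambda>" unfolding spanEq using K_one[of d] unfolding K_def
      by (intro span_over_single)
    then obtain k' where k': "k' \<in> K" "c * w = k' * z" unfolding spanL by auto
    have "k \<noteq> 0" using k w by auto
    have "c * k * z = k' * z" using k k' by (simp add: mult.assoc)
    then have "c * k = k'" using z0 by simp
    then have "c = k' / k" using \<open>k \<noteq> 0\<close> by (simp add: field_simps)
    then have cK: "c \<in> K" using K_div[OF assms(2)] k k' unfolding K_def by simp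
    then obtain a b where ab: "a \<in> \<rat>" "b \<in> \<rat>" "c = of_real a + of_real b * om d"
      unfolding K_def K_iff by blast
    obtain N :: int where N: "N > 0" "of_int N * a \<in> \<int>" "of_int N * b \<in> \<int>"
      using Rats_common_denom[OF ab(1,2)] by blast
    define \<beta> where "\<beta> = of_int N * c"
    define \<alpha> where "\<alpha> = of_int N - \<beta>"
    have \<beta>e: "\<beta> = of_real (of_int N * a) + of_real (of_int N * b) * om d"
      unfolding \<beta>_def ab(3) by (simp add: algebra_simps)
    have \<alpha>e: "\<alpha> = of_real (of_int N - of_int N * a) + of_real (- (of_int N * b)) * om d"
      unfolding \<alpha>_def \<beta>e by (simp add: algebra_simps)
    have \<alpha>O: "\<alpha> \<in> ?O" unfolding \<alpha>e using N by (intro zw_O) auto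
    then have \<alpha>K: "\<alpha> \<in> K" unfolding O_iff K_def by simp
    have "\<alpha> \<noteq> 0"
    proof
      assume "\<alpha> = 0"
      then have "of_int N * 1 = of_int N * c" unfolding \<alpha>_def \<beta>_def by simp
      then have "c = 1" using N(1) by (simp only: mult_cancel_left) simp
      then show False using False by simp
    qed
    have key: "\<alpha> * \<phi> y \<in> \<Lambda>" if y: "y \<in> K" for y
    proof -
      from comm y obtain u u' where uu: "u \<in> \<Lambda>" "u' \<in> \<Lambda>'" "\<phi> y - \<phi>' y = u + u'" by blast
      from uu(2) L'eq obtain v1 where v1: "v1 \<in> \<Lambda>" "u' = c * v1" by auto
      from phi'eq y L'eq obtain v2 where v2: "v2 \<in> \<Lambda>" "\<phi>' y - c * \<phi> y = c * v2" by auto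
      have "\<alpha> * \<phi> y = of_int N * (\<phi> y - \<phi>' y) + of_int N * (\<phi>' y - c * \<phi> y)"
        unfolding \<alpha>_def \<beta>_def by (simp add: algebra_simps)
      also have "\<dots> = of_int N * u + \<beta> * (v1 + v2)"
        unfolding uu(3) v1(2) v2(2) \<beta>_def by (simp add: algebra_simps)
      finally have e: "\<alpha> * \<phi> y = of_int N * u + \<beta> * (v1 + v2)" .
      have "of_int N * u \<in> \<Lambda>" using uu(1) unfolding LG by (rule L_int)
      moreover have "\<beta> * (v1 + v2) \<in> \<Lambda>" unfolding \<beta>e using N addL[OF v1(1) v2(1)] unfolding LG
        by (intro L_zw) auto
      ultimately show ?thesis unfolding e by (rule addL)
    qed
    have phiL: "\<phi> x \<in> \<Lambda>" if x: "x \<in> K" for x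
    proof -
      define y where "y = x / \<alpha>"
      have yK: "y \<in> K" unfolding y_def using K_div[OF assms(2)] x \<alpha>K unfolding K_def by simp
      have xy: "\<alpha> * y = x" unfolding y_def using \<open>\<alpha> \<noteq> 0\<close> by simp
      have "\<phi> (\<alpha> * y) - \<alpha> * \<phi> y \<in> \<Lambda>" using phiLin \<alpha>O yK by blast
      then have "(\<phi> (\<alpha> * y) - \<alpha> * \<phi> y) + \<alpha> * \<phi> y \<in> \<Lambda>" using key[OF yK] by (rule addL)
      then show ?thesis using xy by simp
    qed
    have phiL': "\<phi>' x \<in> \<Lambda>'" if x: "x \<in> K" for x
    proof -
      have "c * \<phi> x \<in> \<Lambda>'" using phiL[OF x] L'eq by auto
      then have "(\<phi>' x - c * \<phi> x) + c * \<phi> x \<in> \<Lambda>'" using phi'eq x by (intro addL') auto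
      then show ?thesis by simp
    qed
    show ?thesis unfolding K_lattice_phi_zero_def using phiL phiL' by auto
  qed
qed

end
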